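(* There is an absolute constant $C>0$ such that for every $\varepsilon\in(0,1]$, the refined tri-hypergraph of differences of any disjointness-trigraph with sensitivity $\varepsilon$ has VC-dimension at most $C\cdot\frac{1}{\varepsilon}\ln\frac{2}{\varepsilon}$.
   Context: A tri-hypergraph is $(V,\mathcal{E})$ with $V$ finite and $\mathcal{E}$ a collection of ordered partitions $(B,R,W)$ of $V$ (tri-edges); $X\subseteq V$ is shattered if for every $Y\subseteq X$ some tri-edge has $X\cap B=X\cap(B\cup R)=Y$; the VC-dimension is the largest size of a shattered set. For tri-edges $e_1=(B_1,R_1,W_1)$, $e_2=(B_2,R_2,W_2)$, $e_1\setminus e_2=(B,R,W)$ with $B=B_1\cap W_2$, $R=((B_1\cup R_1)\cap(W_2\cup R_2))\setminus B$, $W=V\setminus(B\cup R)$. A trigraph $(V,E,R)$ (plain edges $E$ and red edges $R$ disjoint sets of pairs of distinct vertices) gives for each $v$ the tri-edge $e_v=(N[v],R(v),W(v))$, where $N[v]$ is $v$ with its plain neighbours, $R(v)$ its red neighbours and $W(v)$ the remaining vertices. Let $\mathcal{F}$ be a finite nonempty family of subsets of $V$, $\mathcal{F}_{xy}$ the members containing $x$ and $y$. The disjointness-trigraph with sensitivity $\varepsilon$ is $T=(V,E,R)$ with $E=\{xy:x\ne y,\mathcal{F}_{xy}=\emptyset\}$, $R=\{xy:0<|\mathcal{F}_{xy}|\leq\varepsilon|\mathcal{F}|\}$. Let $R_1=\{xy\in R:|\mathcal{F}_{xy}|\leq\varepsilon|\mathcal{F}|/2\}$, $R_2=R\setminus R_1$,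 $T_1=(V,E,R_1)$, $T_2=(V,E\cup R_1,R_2)$. The refined tri-hypergraph of differences of $T$ is $(V,\{e^{T_1}_v\setminus e^{T_2}_w: v,w\in V\})$, where $e^{T_i}_v$ is the tri-edge of $v$ in $T_i$. *)

theory Defs
  imports "HOL-Analysis.Analysis"
begin

type_synonym 'a triedge = "'a set \<times> 'a set \<times> 'a set"

definition is_triedge :: "'a set \<Rightarrow> 'a triedge \<Rightarrow> bool" where
  "is_triedge V e = (case e of (B, R, W) \<Rightarrow>
      B \<union> R \<union> W = V \<and> B \<inter> R = {} \<and> B \<inter> W = {} \<and> R \<inter> W = {})"

definition tri_shattered :: "'a set \<Rightarrow> 'a triedge set \<Rightarrow> 'a set \<Rightarrow> bool" where
  "tri_shattered V \<E> X = (X \<subseteq> V \<and>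
     (\<forall>Y \<subseteq> X. \<exists>e \<in> \<E>. case e of (B, R, W) \<Rightarrow> X \<inter> B = Y \<and> X \<inter> (B \<union> R) = Y))"

definition tri_vc_dim :: "'a set \<Rightarrow> 'a triedge set \<Rightarrow> nat" where
  "tri_vc_dim V \<E> = Max ({0} \<union> {card X | X. tri_shattered V \<E> X})"

definition triedge_diff :: "'a set \<Rightarrow> 'a triedge \<Rightarrow> 'a triedge \<Rightarrow> 'a triedge" where
  "triedge_diff V e1 e2 = (case e1 of (B1, R1, W1) \<Rightarrow> case e2 of (B2, R2, W2) \<Rightarrow>
     (let B = B1 \<inter> W2;
          R = ((B1 \<union> R1) \<inter> (W2 \<union> R2)) - B
      in (B, R, V - (B \<union> R))))"

text \<open>A trigraph (V, E, R): plain and red edges are sets of unordered pairs {x,y}, x \<noteq> y.\<close>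
definition trigraph_edge :: "'a set \<Rightarrow> 'a set set \<Rightarrow> 'a set set \<Rightarrow> 'a \<Rightarrow> 'a triedge" where
  "trigraph_edge V E R v =
     (let N = {v} \<union> {u \<in> V. u \<noteq> v \<and> {u, v} \<in> E};
          Rv = {u \<in> V. u \<noteq> v \<and> {u, v} \<in> R}
      in (N, Rv, V - (N \<union> Rv)))"

definition fam_xy :: "'a set set \<Rightarrow> 'a \<Rightarrow> 'a \<Rightarrow> 'a set set" where
  "fam_xy \<F> x y = {S \<in> \<F>. x \<in> S \<and> y \<in> S}"

definition disj_E :: "'a set \<Rightarrow> 'a set set \<Rightarrow> 'a set set" where
  "disj_E V \<F> = {{x, y} | x y. x \<in> V \<and> y \<in> V \<and> x \<noteq> y \<and> fam_xy \<F> x y = {}}"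

definition disj_R :: "'a set \<Rightarrow> 'a set set \<Rightarrow> real \<Rightarrow> 'a set set" where
  "disj_R V \<F> \<epsilon> = {{x, y} | x y. x \<in> V \<and> y \<in> V \<and> x \<noteq> y \<and>
      0 < card (fam_xy \<F> x y) \<and> real (card (fam_xy \<F> x y)) \<le> \<epsilon> * real (card \<F>)}"

definition disj_R1 :: "'a set \<Rightarrow> 'a set set \<Rightarrow> real \<Rightarrow> 'a set set" where
  "disj_R1 V \<F> \<epsilon> = {{x, y} | x y. {x, y} \<in> disj_R V \<F> \<epsilon> \<and>
      real (card (fam_xy \<F> x y)) \<le> \<epsilon> * real (card \<F>) / 2}"

definition disj_R2 :: "'a set \<Rightarrow> 'a set set \<Rightarrow> real \<Rightarrow> 'a set set" where
  "disj_R2 V \<F> \<epsilon> = disj_R V \<F> \<epsilon> - disj_R1 V \<F> \<epsilon>"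

definition refined_diff_edges :: "'a set \<Rightarrow> 'a set set \<Rightarrow> real \<Rightarrow> 'a triedge set" where
  "refined_diff_edges V \<F> \<epsilon> =
     {triedge_diff V (trigraph_edge V (disj_E V \<F>) (disj_R1 V \<F> \<epsilon>) v)
                     (trigraph_edge V (disj_E V \<F> \<union> disj_R1 V \<F> \<epsilon>) (disj_R2 V \<F> \<epsilon>) w)
      | v w. v \<in> V \<and> w \<in> V}"

end

theory Submission
  imports Defs
begin


definition Om :: "'b set \<Rightarrow> nat \<Rightarrow> 'b list set" where
  "Om F k = {xs. set xs \<subseteq> F \<and> length xs = k}"

definition cnt :: "'b set \<Rightarrow> 'b list \<Rightarrow> nat" where
  "cnt G xs = length (filter (\<lambda>S. S \<in> G) xs)"

lemma finite_Om: "finite F \<Longrightarrow> finite (Om F k)"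
  unfolding Om_def by (rule finite_lists_length_eq)

lemma card_Om: "finite F \<Longrightarrow> card (Om F k) = card F ^ k"
  unfolding Om_def by (rule card_lists_length_eq)

lemma sum_Om_Suc:
  assumes "finite F"
  shows "(\<Sum>xs\<in>Om F (Suc k). f xs) = (\<Sum>x\<in>F. \<Sum>xs\<in>Om F k. f (x#xs))"
proof -
  have "(\<Sum>xs\<in>Om F (Suc k). f xs) = (\<Sum>(xs,x)\<in>Om F k \<times> F. f (x # xs))"
    unfolding Om_def lists_length_Suc_eq
    by (subst sum.reindex) (auto simp: inj_on_def case_prod_unfold)
  also have "\<dots> = (\<Sum>xs\<in>Om F k. \<Sum>x\<in>F. f (x#xs))"
    by (simp add: sum.cartesian_product)
  also have "\<dots> = (\<Sum>x\<in>F. \<Sum>xs\<in>Om F k. f (x#xs))"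
    by (rule sum.swap)
  finally show ?thesis .
qed

lemma cnt_Cons: "cnt G (x#xs) = (if x \<in> G then 1 else 0) + cnt G xs"
  by (simp add: cnt_def)

lemma M1:
  assumes "finite F" "G \<subseteq> F"
  shows "(\<Sum>xs\<in>Om F k. real (cnt G xs)) * card F = k * card G * card F ^ k"
proof (induction k)
  case 0 then show ?case by (simp add: Om_def cnt_def)
next
  case (Suc k)
  have "(\<Sum>xs\<in>Om F (Suc k). real (cnt G xs)) =
     (\<Sum>x\<in>F. \<Sum>xs\<in>Om F k. ((if x \<in> G then 1 else 0) + real (cnt G xs)))"
    unfolding sum_Om_Suc[OF assms(1)] cnt_Cons by (intro sum.cong) auto
  also have "\<dots> = (\<Sum>x\<in>F. (if x \<in> G then 1 else 0) * real (card F ^ k) + (\<Sum>xs\<in>Om F k. real (cnt G xs)))"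
    by (simp add: sum.distrib card_Om[OF assms(1)] mult.commute)
  also have "\<dots> = card G * real (card F ^ k) + card F * (\<Sum>xs\<in>Om F k. real (cnt G xs))"
    using assms by (simp add: sum.distrib sum_distrib_right[symmetric] sum.If_cases Int_absorb1)
  finally show ?case using Suc by (simp add: algebra_simps)
qed

lemma sum_ind: "finite F \<Longrightarrow> G \<subseteq> F \<Longrightarrow> (\<Sum>x\<in>F. (if x \<in> G then 1 else 0)::real) = card G"
  by (simp add: sum.If_cases Int_absorb1)

lemma M2:
  assumes "finite F" "G \<subseteq> F"
  shows "(\<Sum>xs\<in>Om F k. real (cnt G xs)^2) * card F ^ 2
     = card F ^ k * (k * card G * card F + k * (real k - 1) * card G ^ 2)"
proof (induction k)
  case 0 then show ?case by (simp add: Om_def cnt_def)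
next
  case (Suc k)
  let ?m = "real (card F)" and ?g = "real (card G)"
  let ?S1 = "(\<Sum>xs\<in>Om F k. real (cnt G xs))" and ?S2 = "(\<Sum>xs\<in>Om F k. real (cnt G xs)^2)"
  have "(\<Sum>xs\<in>Om F (Suc k). real (cnt G xs)^2) =
     (\<Sum>x\<in>F. \<Sum>xs\<in>Om F k. ((if x \<in> G then 1 else 0) + 2 * (if x \<in> G then 1 else 0) * real (cnt G xs) + real (cnt G xs)^2))"
    unfolding sum_Om_Suc[OF assms(1)] cnt_Cons by (intro sum.cong) (auto simp: power2_eq_square algebra_simps)
  also have "\<dots> = (\<Sum>x\<in>F. (if x \<in> G then 1 else 0) * ?m ^ k + 2 * (if x \<in> G then 1 else 0) * ?S1 + ?S2)"
    by (simp add: sum.distrib card_Om[OF assms(1)] mult.commute sum_distrib_left sum_distrib_right)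
  also have "\<dots> = (\<Sum>x\<in>F. (if x \<in> G then 1 else 0)) * ?m ^ k + 2 * (\<Sum>x\<in>F. (if x \<in> G then 1 else 0)) * ?S1 + ?m * ?S2"
    by (simp add: sum.distrib sum_distrib_right[symmetric] sum_distrib_left[symmetric])
  also have "\<dots> = ?g * ?m ^ k + 2 * ?g * ?S1 + ?m * ?S2"
    using sum_ind[OF assms] by simp
  finally have e: "(\<Sum>xs\<in>Om F (Suc k). real (cnt G xs)^2) = ?g * ?m ^ k + 2 * ?g * ?S1 + ?m * ?S2" .
  have m1: "?S1 * ?m = k * ?g * ?m ^ k" using M1[OF assms] by simp
  have "(\<Sum>xs\<in>Om F (Suc k). real (cnt G xs)^2) * ?m^2 = ?g * ?m ^ (k+2) + 2 * ?g * ?m * (?S1 * ?m) + ?m * (?S2 * ?m^2)"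
    unfolding e by (simp add: algebra_simps power2_eq_square)
  also have "\<dots> = ?g * ?m ^ (k+2) + 2 * ?g * ?m * (k * ?g * ?m ^ k) + ?m * (?m ^ k * (k * ?g * ?m + k * (real k - 1) * ?g ^ 2))"
    using m1 Suc by simp
  also have "\<dots> = ?m ^ Suc k * (Suc k * ?g * ?m + Suc k * (real (Suc k) - 1) * ?g ^ 2)"
    by (simp add: algebra_simps power2_eq_square)
  finally show ?case by (simp add: algebra_simps)
qed

lemma centered:
  assumes "finite F" "G \<subseteq> F"
  shows "(\<Sum>xs\<in>Om F k. (card F * real (cnt G xs) - real k * real (card G))^2) \<le> real k * real (card G) * real (card F) ^ Suc k"
proof -
  let ?m = "real (card F)" and ?g = "real (card G)"
  let ?S1 = "(\<Sum>xs\<in>Om F k. real (cnt G xs))" and ?S2 = "(\<Sum>xs\<in>Om F k. real (cnt G xs)^2)"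
  have "(\<Sum>xs\<in>Om F k. (?m * real (cnt G xs) - k * ?g)^2)
      = (\<Sum>xs\<in>Om F k. ?m^2 * real (cnt G xs)^2 - 2 * k * ?g * ?m * real (cnt G xs) + (k * ?g)^2)"
    by (intro sum.cong) (auto simp: power2_eq_square algebra_simps)
  also have "\<dots> = ?S2 * ?m^2 - 2 * k * ?g * (?S1 * ?m) + (k*?g)^2 * ?m ^ k"
    by (simp add: sum.distrib sum_subtractf sum_distrib_left card_Om[OF assms(1)] algebra_simps)
  also have "\<dots> = ?m ^ k * (k * ?g * ?m + k * (real k - 1) * ?g ^ 2) - 2 * k * ?g * (k * ?g * ?m ^ k) + (k*?g)^2 * ?m ^ k"
    using M1[OF assms, of k] M2[OF assms, of k] by simp
  also have "\<dots> = ?m ^ k * (k * ?g * ?m - k * ?g^2)"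
    by (simp add: algebra_simps power2_eq_square)
  also have "\<dots> \<le> ?m ^ k * (k * ?g * ?m)" by (intro mult_left_mono) auto
  finally show ?thesis by (simp add: algebra_simps)
qed

lemma cheb:
  fixes \<delta> :: real
  assumes "finite F" "G \<subseteq> F" "(\<delta>::real) > 0"
  shows "card {xs\<in>Om F k. \<delta> \<le> \<bar>card F * real (cnt G xs) - real k * real (card G)\<bar>} * \<delta>^2 \<le> real k * real (card G) * real (card F) ^ Suc k"
proof -
  let ?B = "{xs\<in>Om F k. \<delta> \<le> \<bar>card F * real (cnt G xs) - real k * real (card G)\<bar>}"
  have "card ?B * \<delta>^2 = (\<Sum>xs\<in>?B. \<delta>^2)" by simp
  also have "\<dots> \<le> (\<Sum>xs\<in>?B. (card F * real (cnt G xs) - real k * real (card G))^2)"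
  proof (rule sum_mono)
    fix xs assume "xs \<in> ?B"
    then have "\<delta> \<le> \<bar>card F * real (cnt G xs) - real k * real (card G)\<bar>" by simp
    then show "\<delta>^2 \<le> (card F * real (cnt G xs) - real k * real (card G))^2"
      using assms(3) by (metis abs_le_square_iff abs_of_pos)
  qed
  also have "\<dots> \<le> (\<Sum>xs\<in>Om F k. (card F * real (cnt G xs) - real k * real (card G))^2)"
    by (rule sum_mono2) (auto simp: finite_Om[OF assms(1)])
  also have "\<dots> \<le> real k * real (card G) * real (card F) ^ Suc k" by (rule centered[OF assms(1,2)])
  finally show ?thesis .
qed

lemma avoid_card:
  assumes "finite F" "G \<subseteq> F"
  shows "card {xs\<in>Om F k. set xs \<inter> G = {}} = (card F - card G) ^ k"
proof -
  have "{xs\<in>Om F k. set xs \<inter> G = {}} = Om (F - G) k" unfolding Om_def by auto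
  then show ?thesis using card_Om[of "F - G" k] assms by (simp add: card_Diff_subset finite_subset)
qed

lemma bern: assumes "0 \<le> a" "a \<le> 1" shows "(1 - a)^k * (1 + k * a) \<le> (1::real)"
proof (induction k)
  case 0 then show ?case by simp
next
  case (Suc k)
  have "(1 - a)^Suc k * (1 + Suc k * a) = (1-a)^k * ((1-a) * (1 + k*a + a))" by (simp add: algebra_simps)
  also have "\<dots> \<le> (1-a)^k * (1 + k*a)"
  proof (rule mult_left_mono)
    show "(1-a) * (1 + k*a + a) \<le> 1 + k*a" using assms
      by (simp add: algebra_simps)
    show "0 \<le> (1-a)^k" using assms by simp
  qed
  finally show ?case using Suc by linarith
qed




lemma pow_sum: "finite X \<Longrightarrow> (\<Sum>D\<in>Pow X. (x::real) ^ card D) = (1 + x) ^ card X"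
proof (induction X rule: finite_induct)
  case empty then show ?case by simp
next
  case (insert a A)
  have disj: "Pow A \<inter> insert a ` Pow A = {}" using insert by auto
  have inj: "inj_on (insert a) (Pow A)" using insert unfolding inj_on_def by (metis PowD insert_absorb insert_ident subsetD)
  have "(\<Sum>D\<in>Pow (insert a A). x ^ card D) = (\<Sum>D\<in>Pow A. x ^ card D) + (\<Sum>D\<in>insert a ` Pow A. x ^ card D)"
    unfolding Pow_insert using insert disj by (intro sum.union_disjoint) auto
  also have "(\<Sum>D\<in>insert a ` Pow A. x ^ card D) = (\<Sum>D\<in>Pow A. x ^ card (insert a D))"
    by (rule sum.reindex[OF inj, unfolded comp_def])
  also have "\<dots> = (\<Sum>D\<in>Pow A. x * x ^ card D)"
    using insert by (intro sum.cong) (auto simp: finite_subset card_insert_if)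
  finally show ?case using insert by (simp add: sum_distrib_left[symmetric] algebra_simps)
qed

definition symd :: "'a set \<Rightarrow> 'a set \<Rightarrow> 'a set" where "symd A B = (A - B) \<union> (B - A)"

lemma small_sets:
  assumes "finite X" "r \<ge> 0"
  shows "real (card {D\<in>Pow X. real (card D) \<le> r}) \<le> 2 powr r * (3/2) ^ card X"
proof -
  have "real (card {D\<in>Pow X. real (card D) \<le> r}) = (\<Sum>D\<in>Pow X. if real (card D) \<le> r then 1 else 0)"
    using assms by (simp add: sum.If_cases Int_def)
  also have "\<dots> \<le> (\<Sum>D\<in>Pow X. 2 powr r * (1/2) ^ card D)"
  proof (rule sum_mono)
    fix D assume "D \<in> Pow X"
    show "(if real (card D) \<le> r then 1 else 0) \<le> 2 powr r * (1/2::real) ^ card D"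
    proof (cases "real (card D) \<le> r")
      case True
      have "(2::real) ^ card D = 2 powr real (card D)" by (simp add: powr_realpow)
      also have "\<dots> \<le> 2 powr r" using True by (intro powr_mono) auto
      finally have "1 \<le> 2 powr r / 2 ^ card D" by simp
      then show ?thesis using True by (simp add: power_one_over)
    qed auto
  qed
  also have "\<dots> = 2 powr r * (3/2) ^ card X"
    using pow_sum[OF assms(1), of "1/2"] by (simp add: sum_distrib_left[symmetric])
  finally show ?thesis .
qed

lemma ball_card:
  assumes "finite X" "r \<ge> 0" "Z \<subseteq> X"
  shows "real (card {Y\<in>Pow X. real (card (symd Y Z)) \<le> r}) \<le> 2 powr r * (3/2) ^ card X"
proof -
  have inj: "inj_on (\<lambda>Y. symd Y Z) {Y\<in>Pow X. real (card (symd Y Z)) \<le> r}"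
    unfolding inj_on_def symd_def by blast
  have sub: "(\<lambda>Y. symd Y Z) ` {Y\<in>Pow X. real (card (symd Y Z)) \<le> r} \<subseteq> {D\<in>Pow X. real (card D) \<le> r}"
    using assms(3) unfolding symd_def by auto
  have "card {Y\<in>Pow X. real (card (symd Y Z)) \<le> r} \<le> card {D\<in>Pow X. real (card D) \<le> r}"
    using card_inj_on_le[OF inj sub] assms(1) by simp
  then show ?thesis using small_sets[OF assms(1,2)] by linarith
qed




lemma fam_sym: "fam_xy F u v = fam_xy F v u"
  unfolding fam_xy_def by auto

lemma memE: "u \<in> V \<Longrightarrow> v \<in> V \<Longrightarrow> u \<noteq> v \<Longrightarrow> ({u,v} \<in> disj_E V F) = (fam_xy F u v = {})"
  unfolding disj_E_def by (auto simp: doubleton_eq_iff fam_sym)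

lemma memR: "u \<in> V \<Longrightarrow> v \<in> V \<Longrightarrow> u \<noteq> v \<Longrightarrow> ({u,v} \<in> disj_R V F e) =
   (0 < card (fam_xy F u v) \<and> real (card (fam_xy F u v)) \<le> e * real (card F))"
  unfolding disj_R_def by (auto simp: doubleton_eq_iff fam_sym)

lemma memR1: "u \<in> V \<Longrightarrow> v \<in> V \<Longrightarrow> u \<noteq> v \<Longrightarrow> ({u,v} \<in> disj_R1 V F e) =
   (0 < card (fam_xy F u v) \<and> real (card (fam_xy F u v)) \<le> e * real (card F) / 2 \<and> real (card (fam_xy F u v)) \<le> e * real (card F))"
  unfolding disj_R1_def apply (auto simp: doubleton_eq_iff fam_sym memR)
  apply (rule exI[of _ u], rule exI[of _ v]) by (auto simp: memR)

lemma memR2: "u \<in> V \<Longrightarrow> v \<in> V \<Longrightarrow> u \<noteq> v \<Longrightarrow> ({u,v} \<in> disj_R2 V F e) =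
   (0 < card (fam_xy F u v) \<and> \<not> real (card (fam_xy F u v)) \<le> e * real (card F) / 2 \<and> real (card (fam_xy F u v)) \<le> e * real (card F))"
  unfolding disj_R2_def using memR1[of u V v F e] memR[of u V v F e] by auto

lemma fam_empty: "finite F \<Longrightarrow> (fam_xy F u v = {}) = (card (fam_xy F u v) = 0)"
  unfolding fam_xy_def by auto

lemma props:
  fixes \<epsilon> :: real
  assumes F: "finite F" and eps: "\<epsilon> > 0" and XV: "X \<subseteq> V" and vV: "v \<in> V" and wV: "w \<in> V"
    and e: "e = triedge_diff V (trigraph_edge V (disj_E V F) (disj_R1 V F \<epsilon>) v)
                     (trigraph_edge V (disj_E V F \<union> disj_R1 V F \<epsilon>) (disj_R2 V F \<epsilon>) w)"
    and h1: "X \<inter> fst e = Y" and h2: "X \<inter> (fst e \<union> fst (snd e)) = Y" and uX: "u \<in> X"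
  shows "u \<in> Y \<Longrightarrow> (u = v \<or> fam_xy F u v = {}) \<and> u \<noteq> w \<and> real (card (fam_xy F u w)) > \<epsilon> * card F"
    and "u \<notin> Y \<Longrightarrow> (u \<noteq> v \<and> real (card (fam_xy F u v)) > \<epsilon> * card F / 2) \<or> u = w \<or> real (card (fam_xy F u w)) \<le> \<epsilon> * card F / 2"
proof -
  have uV: "u \<in> V" using uX XV by auto
  have Em: "{u,w} \<in> disj_E V F \<union> disj_R1 V F \<epsilon> \<longleftrightarrow> real (card (fam_xy F u w)) \<le> \<epsilon> * card F / 2" if "u \<noteq> w"
    using that uV wV memE[of u V w F] memR1[of u V w F \<epsilon>] fam_empty[OF F, of u w] eps
    by (auto simp: mult_nonneg_nonneg)
  note defs = triedge_diff_def trigraph_edge_def Let_def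
  show "u \<in> Y \<Longrightarrow> (u = v \<or> fam_xy F u v = {}) \<and> u \<noteq> w \<and> real (card (fam_xy F u w)) > \<epsilon> * card F"
  proof -
    assume "u \<in> Y"
    then have "u \<in> fst e" using h1 by auto
    then show ?thesis using uV vV wV Em memE[of u V v F] memR2[of u V w F \<epsilon>] fam_empty[OF F, of u w]
      unfolding e defs by (auto simp: insert_commute)
  qed
  show "u \<notin> Y \<Longrightarrow> (u \<noteq> v \<and> real (card (fam_xy F u v)) > \<epsilon> * card F / 2) \<or> u = w \<or> real (card (fam_xy F u w)) \<le> \<epsilon> * card F / 2"
  proof -
    assume "u \<notin> Y"
    then have "u \<notin> fst e \<union> fst (snd e)" using h2 uX by auto
    then show ?thesis using uV vV wV Em memE[of u V v F] memR1[of u V v F \<epsilon>] memR2[of u V w F \<epsilon>] fam_empty[OF F, of u v]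
      unfolding e defs by (auto simp: insert_commute)
  qed
qed




definition Gs :: "'a set \<Rightarrow> real \<Rightarrow> 'a set list \<Rightarrow> bool list \<Rightarrow> bool list \<Rightarrow> 'a set" where
  "Gs X t xs a b = {u\<in>X. \<not>(\<exists>i<length xs. u \<in> xs!i \<and> a!i) \<and>
      t \<le> real (card {i. i < length xs \<and> u \<in> xs!i \<and> b!i})}"

definition Ysel :: "'a set \<Rightarrow> real \<Rightarrow> 'a set list \<Rightarrow> 'a \<Rightarrow> 'a \<Rightarrow> 'a set" where
  "Ysel X t xs v w = Gs X t xs (map (\<lambda>S. v \<in> S) xs) (map (\<lambda>S. w \<in> S) xs)"

lemma Ysel_char:
  assumes "set xs \<subseteq> F"
  shows "u \<in> Ysel X t xs v w \<longleftrightarrow> u \<in> X \<and> set xs \<inter> fam_xy F u v = {} \<and> t \<le> real (cnt (fam_xy F u w) xs)"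
proof -
  have 0: "(\<exists>i<length xs. u \<in> xs!i \<and> map (\<lambda>S. v \<in> S) xs ! i) \<longleftrightarrow> (\<exists>S\<in>set xs. u \<in> S \<and> v \<in> S)"
  proof
    assume "\<exists>i<length xs. u \<in> xs!i \<and> map (\<lambda>S. v \<in> S) xs ! i"
    then obtain i where i: "i < length xs" and ui: "u \<in> xs!i" and vi: "map (\<lambda>S. v \<in> S) xs ! i"
      by (elim exE conjE)
    have "v \<in> xs!i" using vi nth_map[OF i, of "\<lambda>S. v \<in> S"] by simp
    moreover have "xs!i \<in> set xs" using i by (rule nth_mem)
    ultimately show "\<exists>S\<in>set xs. u \<in> S \<and> v \<in> S" using ui by (intro bexI[of _ "xs!i"]) simp_all
  next
    assume "\<exists>S\<in>set xs. u \<in> S \<and> v \<in> S"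
    then obtain S where S: "S \<in> set xs" and uS: "u \<in> S" and vS: "v \<in> S" by (elim bexE conjE)
    obtain i where i: "i < length xs" and xi: "xs ! i = S" using S unfolding in_set_conv_nth by (elim exE conjE)
    have "map (\<lambda>S. v \<in> S) xs ! i" using nth_map[OF i, of "\<lambda>S. v \<in> S"] xi vS by simp
    then show "\<exists>i<length xs. u \<in> xs!i \<and> map (\<lambda>S. v \<in> S) xs ! i" using i xi uS by (intro exI[of _ i]) simp
  qed
  have 1: "(\<exists>i<length xs. u \<in> xs!i \<and> map (\<lambda>S. v \<in> S) xs ! i) \<longleftrightarrow> set xs \<inter> fam_xy F u v \<noteq> {}"
    unfolding 0 using assms unfolding fam_xy_def by blast
  have "card {i. i < length xs \<and> u \<in> xs!i \<and> map (\<lambda>S. w \<in> S) xs ! i} = length (filter (\<lambda>S. u \<in> S \<and> w \<in> S) xs)"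
    by (simp add: length_filter_conv_card conj_assoc cong: conj_cong)
  also have "filter (\<lambda>S. u \<in> S \<and> w \<in> S) xs = filter (\<lambda>S. S \<in> fam_xy F u w) xs"
    using assms unfolding fam_xy_def by (intro filter_cong) auto
  finally have 2: "card {i. i < length xs \<and> u \<in> xs!i \<and> map (\<lambda>S. w \<in> S) xs ! i} = cnt (fam_xy F u w) xs"
    by (simp add: cnt_def)
  show ?thesis unfolding Ysel_def Gs_def using 1 2 by auto
qed

lemma fam_sub: "fam_xy F u v \<subseteq> F" unfolding fam_xy_def by auto

lemma sq4: "x * (a/4)^2 = (x*a)*a/(16::real)" by (simp add: power2_eq_square)
lemma case3_alg:
  fixes x a m e :: real
  assumes "x * (a * m / 4)^2 \<le> real k * (e * m / 2) * m ^ Suc k" "a = real k * e" "a > 0" "m > 0"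
  shows "x * a \<le> 8 * m ^ k"
proof -
  have e1: "x * (a * m / 4)^2 = (x*a) * (a*m^2) / 16" by (simp add: power2_eq_square)
  have e2: "real k * (e * m / 2) * m ^ Suc k = (8 * m^k) * (a * m^2) / 16"
    using assms(2) by (simp add: power2_eq_square)
  have "(x*a) * (a*m^2) \<le> (8 * m^k) * (a * m^2)" using assms(1) unfolding e1 e2 by linarith
  moreover have "a * m^2 > 0" using assms by simp
  ultimately show ?thesis by (simp add: mult_le_cancel_right_pos)
qed

lemma err_bound:
  fixes \<epsilon> :: real
  assumes F: "finite F" "F \<noteq> {}" and eps: "\<epsilon> > 0" and kpos: "k > 0"
    and t: "t = 3 * real k * \<epsilon> / 4"
    and uX: "u \<in> X" and uv: "u \<noteq> v" and uw: "u \<noteq> w"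
    and PY: "u \<in> Y \<Longrightarrow> (u = v \<or> fam_xy F u v = {}) \<and> u \<noteq> w \<and> real (card (fam_xy F u w)) > \<epsilon> * card F"
    and PN: "u \<notin> Y \<Longrightarrow> (u \<noteq> v \<and> real (card (fam_xy F u v)) > \<epsilon> * card F / 2) \<or> u = w \<or> real (card (fam_xy F u w)) \<le> \<epsilon> * card F / 2"
  shows "real (card {xs\<in>Om F k. u \<in> symd Y (Ysel X t xs v w)}) * (k * \<epsilon>) \<le> 16 * real (card F) ^ k"
proof -
  let ?m = "real (card F)"
  have "card F > 0" using F(1,2) by (simp add: card_gt_0_iff)
  then have mpos: "?m > 0" by simp
  let ?B = "{xs\<in>Om F k. u \<in> symd Y (Ysel X t xs v w)}"
  have Om_set: "set xs \<subseteq> F" if "xs \<in> Om F k" for xs using that unfolding Om_def by auto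
  show ?thesis
  proof (cases "u \<in> Y")
    case True
    let ?G = "fam_xy F u w" let ?g = "real (card ?G)"
    have e: "fam_xy F u v = {}" and gbig: "?g > \<epsilon> * ?m" using PY[OF True] uv by auto
    have "\<epsilon> * ?m > 0" using eps mpos by simp
    then have gpos: "?g > 0" using gbig by linarith
    have sub: "?B \<subseteq> {xs\<in>Om F k. real k * ?g / 4 \<le> \<bar>?m * real (cnt ?G xs) - real k * ?g\<bar>}"
    proof
      fix xs assume xs: "xs \<in> ?B"
      then have "u \<notin> Ysel X t xs v w" using True unfolding symd_def by auto
      then have c: "real (cnt ?G xs) < t" using Ysel_char[where X=X and t=t and u=u and v=v and w=w, OF Om_set] xs uX e by auto
      have "?m * real (cnt ?G xs) \<le> ?m * t" using c mpos by simp
      also have "?m * t = 3/4 * real k * (\<epsilon> * ?m)" using t by (simp add: algebra_simps)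
      also have "\<dots> \<le> 3/4 * real k * ?g" using gbig by (intro mult_left_mono) auto
      finally show "xs \<in> {xs\<in>Om F k. real k * ?g / 4 \<le> \<bar>?m * real (cnt ?G xs) - real k * ?g\<bar>}"
        using xs abs_ge_minus_self[of "?m * real (cnt ?G xs) - real k * ?g"] by auto
    qed
    have "real (card ?B) * (real k * ?g / 4)^2 \<le> real (card {xs\<in>Om F k. real k * ?g / 4 \<le> \<bar>?m * real (cnt ?G xs) - real k * ?g\<bar>}) * (real k * ?g / 4)^2"
      using card_mono[OF _ sub] finite_Om[OF F(1)] by (intro mult_right_mono) auto
    also have "\<dots> \<le> real k * ?g * ?m ^ Suc k"
      by (rule cheb[OF F(1) fam_sub]) (use kpos gpos in auto)
    finally have h: "real (card ?B) * (real k * ?g / 4)^2 \<le> real k * ?g * ?m ^ Suc k" .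
    have "(real (card ?B) * (real k * ?g)) * (real k * ?g) \<le> (16 * ?m ^ Suc k) * (real k * ?g)"
      using h unfolding sq4 by (simp add: algebra_simps)
    moreover have "real k * ?g > 0" using kpos gpos by simp
    ultimately have "real (card ?B) * (real k * ?g) \<le> 16 * ?m ^ Suc k"
      by (simp add: mult_le_cancel_right_pos)
    moreover have "real (card ?B) * (real k * (\<epsilon> * ?m)) \<le> real (card ?B) * (real k * ?g)"
      using gbig by (intro mult_left_mono) auto
    ultimately have "real (card ?B) * (real k * \<epsilon>) * ?m \<le> 16 * ?m ^ k * ?m" by (simp add: algebra_simps)
    then show ?thesis using mpos by simp
  next
    case False
    show ?thesis
    proof (cases "real (card (fam_xy F u v)) > \<epsilon> * ?m / 2")
      case True
      let ?G = "fam_xy F u v" let ?g = "real (card ?G)"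
      have sub: "?B \<subseteq> {xs\<in>Om F k. set xs \<inter> ?G = {}}"
      proof
        fix xs assume xs: "xs \<in> ?B"
        then have "u \<in> Ysel X t xs v w" using False unfolding symd_def by auto
        then show "xs \<in> {xs\<in>Om F k. set xs \<inter> ?G = {}}"
          using Ysel_char[where X=X and t=t and u=u and v=v and w=w, OF Om_set] xs by auto
      qed
      have "real (card ?B) \<le> real (card F - card ?G) ^ k"
        using card_mono[OF _ sub] avoid_card[OF F(1) fam_sub] finite_Om[OF F(1)] by (simp del: of_nat_diff)
      also have "real (card F - card ?G) = ?m * (1 - ?g / ?m)"
        using card_mono[OF F(1) fam_sub] mpos by (simp add: of_nat_diff field_simps)
      finally have b: "real (card ?B) \<le> ?m ^ k * (1 - ?g / ?m) ^ k" by (simp add: power_mult_distrib)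
      have a0: "0 \<le> ?g / ?m" "?g / ?m \<le> 1" using card_mono[OF F(1) fam_sub] mpos by auto
      let ?P = "(1 - ?g/?m)^k"
      have P1: "?P * (1 + k * (?g/?m)) \<le> 1" by (rule bern[OF a0])
      have P0: "0 \<le> ?P" using a0 by simp
      have ka: "k * (\<epsilon>/2) \<le> k * (?g/?m)" using True mpos by (intro mult_left_mono) (auto simp: field_simps)
      have "?P * (k * (\<epsilon>/2)) \<le> ?P * (k * (?g/?m))" using ka P0 by (rule mult_left_mono)
      also have "\<dots> \<le> ?P * (1 + k * (?g/?m))" using P0 by (intro mult_left_mono) auto
      finally have "?P * (k * (\<epsilon>/2)) \<le> 1" using P1 by linarith
      then have P2: "?P * (k * \<epsilon>) \<le> 2" by simp
      have "real (card ?B) * (k * \<epsilon>) \<le> (?m ^ k * ?P) * (k * \<epsilon>)"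
        using b eps by (intro mult_right_mono) auto
      also have "\<dots> = ?m ^ k * (?P * (k * \<epsilon>))" by simp
      also have "\<dots> \<le> ?m ^ k * 2" using P2 by (intro mult_left_mono) auto
      finally have "real (card ?B) * (k * \<epsilon>) \<le> ?m ^ k * 2" .
      moreover have "?m ^ k \<ge> 0" by simp
      ultimately show ?thesis by linarith
    next
      case notT1: False
      let ?G = "fam_xy F u w" let ?g = "real (card ?G)"
      have gsmall: "?g \<le> \<epsilon> * ?m / 2" using PN[OF False] notT1 uw by auto
      have dpos: "real k * \<epsilon> * ?m / 4 > 0" using kpos eps mpos by simp
      have sub: "?B \<subseteq> {xs\<in>Om F k. real k * \<epsilon> * ?m / 4 \<le> \<bar>?m * real (cnt ?G xs) - real k * ?g\<bar>}"
      proof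
        fix xs assume xs: "xs \<in> ?B"
        then have "u \<in> Ysel X t xs v w" using False unfolding symd_def by auto
        then have c: "t \<le> real (cnt ?G xs)" using Ysel_char[where X=X and t=t and u=u and v=v and w=w, OF Om_set] xs by auto
        have "3/4 * real k * \<epsilon> * ?m = ?m * t" using t by (simp add: algebra_simps)
        also have "\<dots> \<le> ?m * real (cnt ?G xs)" using c mpos by simp
        finally have 1: "3/4 * real k * \<epsilon> * ?m \<le> ?m * real (cnt ?G xs)" .
        have 2: "real k * ?g \<le> real k * (\<epsilon> * ?m / 2)" using gsmall by (intro mult_left_mono) auto
        show "xs \<in> {xs\<in>Om F k. real k * \<epsilon> * ?m / 4 \<le> \<bar>?m * real (cnt ?G xs) - real k * ?g\<bar>}"
          using xs 1 2 abs_ge_self[of "?m * real (cnt ?G xs) - real k * ?g"] by auto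
      qed
      have "real (card ?B) * (real k * \<epsilon> * ?m / 4)^2 \<le> real (card {xs\<in>Om F k. real k * \<epsilon> * ?m / 4 \<le> \<bar>?m * real (cnt ?G xs) - real k * ?g\<bar>}) * (real k * \<epsilon> * ?m / 4)^2"
        using card_mono[OF _ sub] finite_Om[OF F(1)] by (intro mult_right_mono) auto
      also have "\<dots> \<le> real k * ?g * ?m ^ Suc k"
        by (rule cheb[OF F(1) fam_sub dpos])
      also have "\<dots> \<le> real k * (\<epsilon> * ?m / 2) * ?m ^ Suc k"
        by (rule mult_right_mono[OF mult_left_mono[OF gsmall]]) auto
      finally have "real (card ?B) * (real k * \<epsilon> * ?m / 4)^2 \<le> real k * (\<epsilon> * ?m / 2) * ?m ^ Suc k" .
      then have "real (card ?B) * (real k * \<epsilon>) \<le> 8 * ?m ^ k"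
        by (rule case3_alg) (use kpos eps mpos in auto)
      moreover have "?m ^ k \<ge> 0" by simp
      ultimately show ?thesis by linarith
    qed
  qed
qed




lemma card_filter_sum: "finite A \<Longrightarrow> real (card {x\<in>A. P x}) = (\<Sum>x\<in>A. if P x then 1 else 0)"
  by (simp add: sum.If_cases Int_def)

lemma Gs_sub: "Gs X t xs a b \<subseteq> X" unfolding Gs_def by auto

lemma final_arith:
  fixes d r :: real and k :: nat
  assumes "2 ^ n \<le> 2 * 4 ^ k * 2 powr r * (3/2) ^ n" "d = real n"
  shows "d * ln (4/3) \<le> (1 + 2 * real k + r) * ln 2"
proof -
  have "(4/3::real) ^ n * (3/2) ^ n = 2 ^ n" by (simp add: power_mult_distrib[symmetric])
  then have "(4/3::real) ^ n * (3/2) ^ n \<le> (2 * 4 ^ k * 2 powr r) * (3/2) ^ n" using assms(1) by simp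
  then have a: "(4/3::real) ^ n \<le> 2 * 4 ^ k * 2 powr r" by (simp add: mult_le_cancel_right_pos)
  have b: "2 * (4::real) ^ k * 2 powr r = 2 powr (1 + 2 * real k + r)"
  proof -
    have "(4::real) ^ k = 2 powr (2 * real k)"
      by (simp add: powr_realpow[symmetric] powr_powr[symmetric] power_mult)
    then show ?thesis by (simp add: powr_add)
  qed
  have "ln ((4/3::real) ^ n) \<le> ln (2 powr (1 + 2 * real k + r))"
    using a b by (subst ln_le_cancel_iff) auto
  then show ?thesis using assms(2) by (simp add: ln_realpow ln_powr)
qed

lemma dim_bound:
  fixes \<epsilon> :: real and X :: "'a set" and vf wf :: "'a set \<Rightarrow> 'a" and F :: "'a set set"
  assumes F: "finite F" "F \<noteq> {}" and eps: "\<epsilon> > 0" and finX: "finite X"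
    and kbig: "real k * \<epsilon> \<ge> 1600" and kpos: "k > 0"
    and shat: "\<And>Y u. Y \<subseteq> X \<Longrightarrow> u \<in> X \<Longrightarrow>
       (u \<in> Y \<longrightarrow> (u = vf Y \<or> fam_xy F u (vf Y) = {}) \<and> u \<noteq> wf Y \<and> real (card (fam_xy F u (wf Y))) > \<epsilon> * card F) \<and>
       (u \<notin> Y \<longrightarrow> (u \<noteq> vf Y \<and> real (card (fam_xy F u (vf Y))) > \<epsilon> * card F / 2) \<or> u = wf Y \<or> real (card (fam_xy F u (wf Y))) \<le> \<epsilon> * card F / 2)"
  shows "real (card X) \<le> (200 * real k + 500) / 23"
proof -
  define t where "t = 3 * real k * \<epsilon> / 4"
  define M where "M = real (card F) ^ k"
  define d where "d = real (card X)"
  define r where "r = 4 + d / 50"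
  define err where "err Y xs = card (symd Y (Ysel X t xs (vf Y) (wf Y)))" for Y xs
  define Good where "Good Y = {xs\<in>Om F k. real (err Y xs) \<le> r}" for Y
  have M0: "M > 0" unfolding M_def using F by (simp add: card_gt_0_iff)
  have finOm: "finite (Om F k)" by (rule finite_Om[OF F(1)])
  have cOm: "real (card (Om F k)) = M" unfolding M_def by (simp add: card_Om[OF F(1)])
  have keps: "real k * \<epsilon> > 0" using kbig by simp
  have step1: "(\<Sum>xs\<in>Om F k. real (err Y xs)) \<le> M * (2 + d / 100)" if Y: "Y \<subseteq> X" for Y
  proof -
    let ?v = "vf Y" and ?w = "wf Y"
    have "(\<Sum>xs\<in>Om F k. real (err Y xs)) = (\<Sum>xs\<in>Om F k. \<Sum>u\<in>X. if u \<in> symd Y (Ysel X t xs ?v ?w) then 1 else 0)"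
    proof (intro sum.cong refl)
      fix xs
      have "Ysel X t xs ?v ?w \<subseteq> X" unfolding Ysel_def by (rule Gs_sub)
      then have "symd Y (Ysel X t xs ?v ?w) \<subseteq> X" using Y unfolding symd_def by (intro Un_least Diff_subset[THEN subset_trans])
      then have "symd Y (Ysel X t xs ?v ?w) = {u\<in>X. u \<in> symd Y (Ysel X t xs ?v ?w)}" by auto
      then show "real (err Y xs) = (\<Sum>u\<in>X. if u \<in> symd Y (Ysel X t xs ?v ?w) then 1 else 0)"
        unfolding err_def using card_filter_sum[OF finX, of "\<lambda>u. u \<in> symd Y (Ysel X t xs ?v ?w)"] by simp
    qed
    also have "\<dots> = (\<Sum>u\<in>X. \<Sum>xs\<in>Om F k. if u \<in> symd Y (Ysel X t xs ?v ?w) then 1 else 0)"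
      by (rule sum.swap)
    also have "\<dots> = (\<Sum>u\<in>X. real (card {xs\<in>Om F k. u \<in> symd Y (Ysel X t xs ?v ?w)}))"
      using card_filter_sum[OF finOm] by simp
    also have "\<dots> \<le> (\<Sum>u\<in>X. M / 100 + (if u \<in> {?v, ?w} then M else 0))"
    proof (rule sum_mono)
      fix u assume uX: "u \<in> X"
      show "real (card {xs\<in>Om F k. u \<in> symd Y (Ysel X t xs ?v ?w)}) \<le> M / 100 + (if u \<in> {?v, ?w} then M else 0)"
      proof (cases "u \<in> {?v, ?w}")
        case True
        have "card {xs\<in>Om F k. u \<in> symd Y (Ysel X t xs ?v ?w)} \<le> card (Om F k)"
          by (rule card_mono[OF finOm]) auto
        then show ?thesis using True cOm M0 by simp
      next
        case False
        have h: "real (card {xs\<in>Om F k. u \<in> symd Y (Ysel X t xs ?v ?w)}) * (real k * \<epsilon>) \<le> 16 * M"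
          unfolding M_def
          by (rule err_bound[OF F eps kpos t_def uX]) (use False shat[OF Y uX] in auto)
        have "real (card {xs\<in>Om F k. u \<in> symd Y (Ysel X t xs ?v ?w)}) * 1600 \<le> real (card {xs\<in>Om F k. u \<in> symd Y (Ysel X t xs ?v ?w)}) * (real k * \<epsilon>)"
          using kbig by (intro mult_left_mono) auto
        then show ?thesis using h False M0 by simp
      qed
    qed
    also have "\<dots> = d * (M / 100) + M * real (card (X \<inter> {?v, ?w}))"
      unfolding d_def using finX apply (simp add: sum.distrib sum.If_cases)
      apply (rule disjI2) apply (rule arg_cong[where f=card]) by auto
    also have "\<dots> \<le> d * (M / 100) + M * 2"
    proof -
      have "card (X \<inter> {?v, ?w}) \<le> card {?v, ?w}" by (rule card_mono) auto
      also have "\<dots> \<le> 2" by (cases "vf Y = wf Y") auto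
      finally show ?thesis using M0 by simp
    qed
    finally show ?thesis by (simp add: algebra_simps)
  qed
  \<comment> \<open>Step 2: Markov\<close>
  have step2: "real (card (Good Y)) \<ge> M / 2" if Y: "Y \<subseteq> X" for Y
  proof -
    have r0: "r > 0" unfolding r_def d_def by simp
    let ?Bad = "Om F k - Good Y"
    have "real (card ?Bad) * r = (\<Sum>xs\<in>?Bad. r)" by simp
    also have "\<dots> \<le> (\<Sum>xs\<in>?Bad. real (err Y xs))"
      by (rule sum_mono) (auto simp: Good_def)
    also have "\<dots> \<le> (\<Sum>xs\<in>Om F k. real (err Y xs))"
      by (rule sum_mono2[OF finOm]) auto
    also have "\<dots> \<le> M * (2 + d / 100)" by (rule step1[OF Y])
    also have "\<dots> = (M / 2) * r" unfolding r_def by (simp add: algebra_simps)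
    finally have "real (card ?Bad) \<le> M / 2" using r0 by (simp add: mult_le_cancel_right_pos)
    moreover have "card ?Bad = card (Om F k) - card (Good Y)"
      by (rule card_Diff_subset) (auto simp: Good_def intro: finite_subset[OF _ finOm])
    moreover have "card (Good Y) \<le> card (Om F k)" by (rule card_mono[OF finOm]) (auto simp: Good_def)
    ultimately show ?thesis using cOm by (simp add: of_nat_diff)
  qed
  define BL where "BL = {bs :: bool list. set bs \<subseteq> UNIV \<and> length bs = k}"
  have finBL: "finite BL" unfolding BL_def by (rule finite_lists_length_eq) simp
  have cBL: "card BL = 2 ^ k" unfolding BL_def using card_lists_length_eq[of "UNIV :: bool set" k] by simp
  define Bd where "Bd = 2 powr r * (3/2) ^ card X"
  have r0: "r \<ge> 0" unfolding r_def d_def by simp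
  have step4: "real (card {Y\<in>Pow X. xs \<in> Good Y}) \<le> 4 ^ k * Bd" if xs: "xs \<in> Om F k" for xs
  proof -
    let ?A = "\<lambda>p. {Y\<in>Pow X. real (card (symd Y (Gs X t xs (fst p) (snd p)))) \<le> r}"
    have sub: "{Y\<in>Pow X. xs \<in> Good Y} \<subseteq> (\<Union>p\<in>BL \<times> BL. ?A p)"
    proof
      fix Y assume "Y \<in> {Y\<in>Pow X. xs \<in> Good Y}"
      then have Y: "Y \<in> Pow X" and e: "real (err Y xs) \<le> r" unfolding Good_def by auto
      have len: "length xs = k" using xs unfolding Om_def by auto
      let ?p = "(map (\<lambda>S. vf Y \<in> S) xs, map (\<lambda>S. wf Y \<in> S) xs)"
      have "?p \<in> BL \<times> BL" unfolding BL_def using len by simp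
      moreover have "Y \<in> ?A ?p" using Y e unfolding err_def Ysel_def by simp
      ultimately show "Y \<in> (\<Union>p\<in>BL \<times> BL. ?A p)" by blast
    qed
    have "card {Y\<in>Pow X. xs \<in> Good Y} \<le> card (\<Union>p\<in>BL \<times> BL. ?A p)"
      by (rule card_mono[OF _ sub]) (use finX finBL in auto)
    also have "\<dots> \<le> (\<Sum>p\<in>BL \<times> BL. card (?A p))"
      by (rule card_UN_le) (use finBL in auto)
    finally have "real (card {Y\<in>Pow X. xs \<in> Good Y}) \<le> (\<Sum>p\<in>BL \<times> BL. real (card (?A p)))"
      by (simp add: of_nat_sum[symmetric] del: of_nat_sum)
    also have "\<dots> \<le> (\<Sum>p\<in>BL \<times> BL. Bd)"
      by (rule sum_mono) (unfold Bd_def, rule ball_card[OF finX r0 Gs_sub])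
    also have "\<dots> = 4 ^ k * Bd" using cBL finBL by (simp add: card_cartesian_product power_mult_distrib[symmetric])
    finally show ?thesis .
  qed
  have step3: "(\<Sum>Y\<in>Pow X. real (card (Good Y))) = (\<Sum>xs\<in>Om F k. real (card {Y\<in>Pow X. xs \<in> Good Y}))"
  proof -
    have "(\<Sum>Y\<in>Pow X. real (card (Good Y))) = (\<Sum>Y\<in>Pow X. \<Sum>xs\<in>Om F k. if real (err Y xs) \<le> r then 1 else 0)"
      unfolding Good_def using card_filter_sum[OF finOm] by simp
    also have "\<dots> = (\<Sum>xs\<in>Om F k. \<Sum>Y\<in>Pow X. if real (err Y xs) \<le> r then 1 else 0)"
      by (rule sum.swap)
    also have "\<dots> = (\<Sum>xs\<in>Om F k. real (card {Y\<in>Pow X. xs \<in> Good Y}))"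
    proof (rule sum.cong[OF refl])
      fix xs assume xs: "xs \<in> Om F k"
      have "{Y\<in>Pow X. xs \<in> Good Y} = {Y\<in>Pow X. real (err Y xs) \<le> r}" using xs unfolding Good_def by auto
      then show "(\<Sum>Y\<in>Pow X. if real (err Y xs) \<le> r then 1 else 0) = real (card {Y\<in>Pow X. xs \<in> Good Y})"
        using card_filter_sum[of "Pow X" "\<lambda>Y. real (err Y xs) \<le> r"] finX by simp
    qed
    finally show ?thesis .
  qed
  have "2 ^ card X * (M / 2) = (\<Sum>Y\<in>Pow X. M / 2)" using finX by (simp add: card_Pow)
  also have "\<dots> \<le> (\<Sum>Y\<in>Pow X. real (card (Good Y)))"
    by (rule sum_mono) (use step2 in auto)
  also have "\<dots> \<le> (\<Sum>xs\<in>Om F k. 4 ^ k * Bd)" unfolding step3 by (rule sum_mono) (use step4 in auto)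
  also have "\<dots> = M * (4 ^ k * Bd)" using cOm by simp
  finally have "2 ^ card X * (M / 2) \<le> (2 * 4 ^ k * Bd) * (M / 2)" by (simp add: algebra_simps)
  then have "2 ^ card X \<le> 2 * 4 ^ k * Bd" using M0 by (simp add: mult_le_cancel_right_pos)
  then have fa: "d * ln (4/3) \<le> (1 + 2 * real k + r) * ln 2"
    by (intro final_arith[where n = "card X"]) (auto simp: Bd_def d_def mult.assoc)
  have l43: "ln (4/3::real) \<ge> 1/4"
  proof -
    have "ln (3/4::real) \<le> 3/4 - 1" by (rule ln_le_minus_one) simp
    moreover have "ln (4/3::real) = - ln (3/4)" using ln_inverse[of "3/4::real"] by simp
    ultimately show ?thesis by simp
  qed
  have l2: "ln (2::real) \<le> 1" using ln_le_minus_one[of "2::real"] by simp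
  have l20: "ln (2::real) \<ge> 0" by simp
  have d0: "d \<ge> 0" unfolding d_def by simp
  have "d * (1/4) \<le> d * ln (4/3)" using l43 d0 by (intro mult_left_mono) auto
  moreover have "(1 + 2 * real k + r) * ln 2 \<le> (1 + 2 * real k + r) * 1"
    using l2 r0 by (intro mult_left_mono) auto
  ultimately have "d / 4 \<le> 1 + 2 * real k + r" using fa by simp
  then show ?thesis unfolding r_def d_def by simp
qed




lemma shattered_bound:
  fixes \<epsilon> :: real
  assumes eps: "0 < \<epsilon>" "\<epsilon> \<le> 1" and V: "finite V" and F: "finite F" "F \<noteq> {}" "\<forall>S\<in>F. S \<subseteq> V"
    and sh: "tri_shattered V (refined_diff_edges V F \<epsilon>) X"
  shows "real (card X) \<le> 30000 * (1 / \<epsilon>) * ln (2 / \<epsilon>)"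
proof -
  have XV: "X \<subseteq> V" using sh unfolding tri_shattered_def by auto
  have finX: "finite X" using finite_subset[OF XV V] .
  define P where "P Y p \<longleftrightarrow> (Y \<subseteq> X \<longrightarrow> (\<forall>u\<in>X.
       (u \<in> Y \<longrightarrow> (u = fst p \<or> fam_xy F u (fst p) = {}) \<and> u \<noteq> snd p \<and> real (card (fam_xy F u (snd p))) > \<epsilon> * card F) \<and>
       (u \<notin> Y \<longrightarrow> (u \<noteq> fst p \<and> real (card (fam_xy F u (fst p))) > \<epsilon> * card F / 2) \<or> u = snd p \<or> real (card (fam_xy F u (snd p))) \<le> \<epsilon> * card F / 2)))" for Y p
  have ex: "\<exists>p. P Y p" for Y
  proof (cases "Y \<subseteq> X")
    case True
    obtain e where e: "e \<in> refined_diff_edges V F \<epsilon>" and ce: "case e of (B, R, W) \<Rightarrow> X \<inter> B = Y \<and> X \<inter> (B \<union> R) = Y"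
      using sh True unfolding tri_shattered_def by blast
    obtain v w where vw: "v \<in> V" "w \<in> V" and ee: "e = triedge_diff V (trigraph_edge V (disj_E V F) (disj_R1 V F \<epsilon>) v)
                     (trigraph_edge V (disj_E V F \<union> disj_R1 V F \<epsilon>) (disj_R2 V F \<epsilon>) w)"
      using e unfolding refined_diff_edges_def by blast
    have h1: "X \<inter> fst e = Y" and h2: "X \<inter> (fst e \<union> fst (snd e)) = Y" using ce by (auto split: prod.splits)
    have "P Y (v, w)" unfolding P_def
      using props[OF F(1) eps(1) XV vw ee h1 h2] by simp
    then show ?thesis by (rule exI)
  next
    case False
    then have "P Y (undefined, undefined)" unfolding P_def by simp
    then show ?thesis by (rule exI)
  qed
  have "\<exists>f. \<forall>Y. P Y (f Y)" by (rule choice) (use ex in blast)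
  then obtain f where f: "\<And>Y. P Y (f Y)" by blast
  define k where "k = nat \<lceil>1600 / \<epsilon>\<rceil>"
  have k1: "real k \<ge> 1600 / \<epsilon>" unfolding k_def by linarith
  have cc: "real_of_int \<lceil>1600 / \<epsilon>\<rceil> - 1 < 1600 / \<epsilon>" "1600 / \<epsilon> \<le> real_of_int \<lceil>1600 / \<epsilon>\<rceil>"
    using ceiling_correct[of "1600 / \<epsilon>"] by auto
  have "1600 / \<epsilon> > 0" using eps by simp
  then have c0: "0 \<le> \<lceil>1600 / \<epsilon>\<rceil>" using cc by linarith
  have k2: "real k \<le> 1600 / \<epsilon> + 1" unfolding k_def using c0 cc by simp
  have "1600 / \<epsilon> > 0" using eps by simp
  then have "real k > 0" using k1 by linarith
  then have kpos: "k > 0" by simp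
  have kbig: "real k * \<epsilon> \<ge> 1600" using k1 eps by (simp add: field_simps)
  have db: "real (card X) \<le> (200 * real k + 500) / 23"
    by (rule dim_bound[OF F(1,2) eps(1) finX kbig kpos, where vf = "\<lambda>Y. fst (f Y)" and wf = "\<lambda>Y. snd (f Y)"])
       (use f in \<open>auto simp: P_def\<close>)
  have ie: "1 \<le> 1 / \<epsilon>" using eps by simp
  have "(200 * real k + 500) / 23 \<le> (200 * (1600 / \<epsilon> + 1) + 500) / 23" using k2 by simp
  also have "\<dots> \<le> (320000 * (1/\<epsilon>) + 700 * (1/\<epsilon>)) / 23" using ie by simp
  also have "\<dots> \<le> 15000 * (1 / \<epsilon>)" using eps by (simp add: field_simps)
  also have "\<dots> \<le> 30000 * (1 / \<epsilon>) * ln (2 / \<epsilon>)"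
  proof -
    have "ln (1/2::real) \<le> 1/2 - 1" by (rule ln_le_minus_one) simp
    then have l2: "ln (2::real) \<ge> 1/2" using ln_inverse[of "2::real"] by simp
    have "2 \<le> 2 / \<epsilon>" using eps by (simp add: field_simps)
    then have "ln 2 \<le> ln (2 / \<epsilon>)" using eps by simp
    then have "1/2 \<le> ln (2 / \<epsilon>)" using l2 by linarith
    then have "30000 * (1 / \<epsilon>) * (1/2) \<le> 30000 * (1 / \<epsilon>) * ln (2 / \<epsilon>)"
      using eps by (intro mult_left_mono) auto
    then show ?thesis by simp
  qed
  finally show ?thesis using db by linarith
qed

theorem lemma4p11:
  shows "\<exists>C::real. C > 0 \<and>
    (\<forall>(\<epsilon>::real) (V::nat set) (\<F>::nat set set).
       0 < \<epsilon> \<and> \<epsilon> \<le> 1 \<and> finite V \<and> finite \<F> \<and> \<F> \<noteq> {} \<and> (\<forall>S\<in>\<F>. S \<subseteq> V) \<longrightarrow>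
       real (tri_vc_dim V (refined_diff_edges V \<F> \<epsilon>)) \<le> C * (1 / \<epsilon>) * ln (2 / \<epsilon>))"
proof (intro exI[of _ 30000] conjI allI impI)
  fix \<epsilon> :: real and V :: "nat set" and \<F> :: "nat set set"
  assume H: "0 < \<epsilon> \<and> \<epsilon> \<le> 1 \<and> finite V \<and> finite \<F> \<and> \<F> \<noteq> {} \<and> (\<forall>S\<in>\<F>. S \<subseteq> V)"
  let ?S = "{0} \<union> {card X | X. tri_shattered V (refined_diff_edges V \<F> \<epsilon>) X}"
  have "?S \<subseteq> {0..card V}"
  proof
    fix n assume "n \<in> ?S"
    then show "n \<in> {0..card V}"
    proof
      assume "n \<in> {card X | X. tri_shattered V (refined_diff_edges V \<F> \<epsilon>) X}"
      then obtain X where "n = card X" "X \<subseteq> V" unfolding tri_shattered_def by auto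
      then show ?thesis using H card_mono by auto
    qed simp
  qed
  then have finS: "finite ?S" using finite_subset by blast
  have "Max ?S \<in> ?S" by (rule Max_in[OF finS]) simp
  moreover have "0 \<le> 30000 * (1 / \<epsilon>) * ln (2 / \<epsilon>)" using H by simp
  moreover have "real (card X) \<le> 30000 * (1 / \<epsilon>) * ln (2 / \<epsilon>)" if "tri_shattered V (refined_diff_edges V \<F> \<epsilon>) X" for X
    using shattered_bound[of \<epsilon> V \<F> X] H that by auto
  ultimately show "real (tri_vc_dim V (refined_diff_edges V \<F> \<epsilon>)) \<le> 30000 * (1 / \<epsilon>) * ln (2 / \<epsilon>)"
    unfolding tri_vc_dim_def by auto
qed simp


end
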